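(* Let $b>1$. Assume that for any $L$, any anytime neural network (ANN) of depth $L$ has anytime predictions at every depth $i > \frac{L}{b}$ that are competitive against the optimal predictor of depth $i$. Consider the EANN built from ANNs of exponentially increasing depths $b^0, b^1, b^2, \dots$, as described in the context. Then after $B$ layers of computation, the EANN produces anytime predictions that are competitive against the optimal predictor of depth $\frac{B}{C}$ for some $C>1$ (depending on $B$), such that $$\sup_B C = 2 + \frac{1}{b-1},$$ and $C$ has expectation $$E_{B\sim \mathrm{uniform}(1,L)}[C] \le 1 - \frac{1}{2b} + \frac{1+\ln(b)}{b-1},$$ where $L$ denotes the total number of layers of the EANN.
   Context: An anytime neural network (ANN) of depth $L$ is a feed-forward network computing feature maps $x_1,\dots,x_L$ layer by layer, with an auxiliary prediction attached to the feature maps, so that after computing $i$ layers a prediction is available. The "optimal of depth $i$" means the predictor obtained by training a network of depth $i$ (cost $i$ layers) only for its final prediction; a prediction is "competitive against the optimal of depth $d$" if its quality is comparable to that optimal predictor. Cost is measured in number of layers computed. An EANN (ensemble of exponentially deepening ANNs) consists of ANNs numbered $1,2,3,\dots$, where ANN number $n+1$ has depth $b^{n}$ (so ANN 1 has depth $1$). The ANNs are computed sequentially in order of depth; ANN $n+1$ starts only after ANNs $1,\dots,n$ are fully computed. Thus after $B$ layers of computation, with $B = z + \sum_{i=0}^{n-1} b^i$ where $0 < z \le b^n$, the EANN is at depth $z$ of ANN number $n+1$. At that moment the EANN outputs the anytime prediction of ANN $n+1$ at depth $z$ if $z > b^{n-1}$ (which by assumption is competitive with the optimal of depth $z$), and otherwise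 reuses the final prediction of ANN number $n$ (of depth $b^{n-1}$, competitive with the optimal of depth $b^{n-1}$). The quantity $C$ is the ratio of the consumed budget $B$ to the depth of the optimal predictor that the EANN's current prediction is competitive against. *)

theory Defs
  imports "HOL-Analysis.Analysis"
begin

text \<open>Total depth of the first n ANNs of the EANN (depths b^0, ..., b^(n-1)).\<close>
definition eann_S :: "real \<Rightarrow> nat \<Rightarrow> real" where
  "eann_S b n = (\<Sum>i<n. b ^ i)"

text \<open>After B layers (B > 0) the EANN is inside ANN number (eann_idx b B + 1), i.e.
  eann_S b n < B \<le> eann_S b (n+1) with n = eann_idx b B.\<close>
definition eann_idx :: "real \<Rightarrow> real \<Rightarrow> nat" where
  "eann_idx b B = (LEAST n. B \<le> eann_S b (Suc n))"

text \<open>Current depth z inside the ANN being computed: B = z + eann_S b n, 0 < z \<le> b^n.\<close>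
definition eann_z :: "real \<Rightarrow> real \<Rightarrow> real" where
  "eann_z b B = B - eann_S b (eann_idx b B)"

text \<open>Depth of the optimal predictor that the EANN's current prediction is competitive
  against: z if z > b^(n-1) (anytime prediction of ANN n+1, by the assumption on ANNs),
  otherwise b^(n-1) (final prediction of ANN n).\<close>
definition eann_depth :: "real \<Rightarrow> real \<Rightarrow> real" where
  "eann_depth b B =
     (let n = eann_idx b B; z = eann_z b B
      in if z > b powr (real n - 1) then z else b powr (real n - 1))"

definition eann_C :: "real \<Rightarrow> real \<Rightarrow> real" where
  "eann_C b B = B / eann_depth b B"

end

theory Submission
  imports Defs
begin

lemma S_Suc: "eann_S b (Suc n) = eann_S b n + b ^ n"
  by (simp add: eann_S_def)

lemma S_closed: "eann_S b n * (b - 1) = b ^ n - 1"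
  by (induction n) (auto simp: S_Suc algebra_simps eann_S_def)

lemma S_mono: assumes "b > 1" "m \<le> n" shows "eann_S b m \<le> eann_S b n"
  unfolding eann_S_def using assms
  by (intro sum_mono2) auto

lemma S_ge_n: assumes "b > 1" shows "real n \<le> eann_S b n"
proof (induction n)
  case (Suc n)
  have "1 \<le> b ^ n" using assms by simp
  then show ?case using Suc by (simp add: S_Suc)
qed (simp add: eann_S_def)

lemma idx_eq:
  assumes "b > 1" "eann_S b n < B" "B \<le> eann_S b (Suc n)"
  shows "eann_idx b B = n"
  unfolding eann_idx_def
proof (rule Least_equality)
  show "B \<le> eann_S b (Suc n)" by fact
  fix m assume m: "B \<le> eann_S b (Suc m)"
  show "n \<le> m"
  proof (rule ccontr)
    assume "\<not> n \<le> m"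
    then have "Suc m \<le> n" by simp
    then have "eann_S b (Suc m) \<le> eann_S b n" using S_mono assms(1) by blast
    then show False using m assms(2) by simp
  qed
qed

lemma a_eq: assumes "b > 1" "n \<ge> 1" shows "b powr (real n - 1) = b ^ (n - 1)"
proof -
  have "real n - 1 = real (n - 1)" using assms by simp
  then show ?thesis using assms powr_realpow[of b "n - 1"] by simp
qed

lemma bn_eq: assumes "n \<ge> 1" shows "(b::real) ^ n = b * b ^ (n - 1)"
  using assms by (cases n) auto

lemma C_seg:
  assumes "b > 1" "n \<ge> 1" "eann_S b n < B" "B \<le> eann_S b n + b ^ n"
  shows "eann_C b B = (if B - eann_S b n > b ^ (n - 1) then B / (B - eann_S b n)
                       else B / b ^ (n - 1))"
proof -
  have i: "eann_idx b B = n" using idx_eq[of b n B] assms by (simp add: S_Suc)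
  show ?thesis
    unfolding eann_C_def eann_depth_def eann_z_def Let_def i a_eq[OF assms(1,2)]
    by simp
qed

lemma exists_seg:
  assumes "b > 1" "B > 1"
  shows "\<exists>n\<ge>1. eann_S b n < B \<and> B \<le> eann_S b n + b ^ n"
proof -
  obtain m :: nat where m: "B < real m" using reals_Archimedean2 by blast
  have ex: "\<exists>k. B \<le> eann_S b (Suc k)"
    using S_ge_n[OF assms(1), of "Suc m"] m by (intro exI[of _ m]) simp
  define n where "n = eann_idx b B"
  have n1: "B \<le> eann_S b (Suc n)"
    unfolding n_def eann_idx_def by (rule LeastI_ex[OF ex])
  have "n \<noteq> 0"
  proof
    assume "n = 0"
    then show False using n1 assms by (simp add: eann_S_def)
  qed
  then have lt: "n - 1 < eann_idx b B" by (simp add: n_def)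
  have "\<not> B \<le> eann_S b (Suc (n - 1))"
    using not_less_Least[OF lt[unfolded eann_idx_def]] .
  then have "eann_S b n < B" using \<open>n \<noteq> 0\<close> by simp
  then show ?thesis using n1 \<open>n \<noteq> 0\<close> by (intro exI[of _ n]) (simp add: S_Suc)
qed


lemma seg_integral:
  assumes b: "b > 1" and n: "n \<ge> 1"
  shows "(eann_C b has_integral (eann_S b n * (1 + ln b) + b ^ (n - 1) * (b - 1/2)))
           {eann_S b n .. eann_S b n + b ^ n}"
proof -
  define s where "s = eann_S b n"
  define a where "a = b ^ (n - 1)"
  have a0: "a > 0" using b by (simp add: a_def)
  have bn: "b ^ n = b * a" using bn_eq[OF n] by (simp add: a_def)
  have aba: "a \<le> b * a" using a0 b by simp
  have s0: "s \<ge> 0" unfolding s_def eann_S_def using b by (intro sum_nonneg) simp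
  have h1: "((\<lambda>B. B / a) has_integral (s + a / 2)) {s..s + a}"
  proof -
    have "((\<lambda>B. B / a) has_integral ((\<lambda>B. B^2 / (2*a)) (s + a) - (\<lambda>B. B^2 / (2*a)) s)) {s..s + a}"
    proof (rule fundamental_theorem_of_calculus)
      show "s \<le> s + a" using a0 by simp
      fix x assume "x \<in> {s..s+a}"
      have "((\<lambda>B. B^2 / (2*a)) has_real_derivative (2 * x / (2 * a))) (at x within {s..s+a})"
        using a0 by (auto intro!: derivative_eq_intros)
      then show "((\<lambda>B. B^2 / (2*a)) has_vector_derivative x / a) (at x within {s..s+a})"
        using a0 by (simp add: has_real_derivative_iff_has_vector_derivative[symmetric])
    qed
    moreover have "(\<lambda>B. B^2 / (2*a)) (s + a) - (\<lambda>B. B^2 / (2*a)) s = s + a / 2"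
      using a0 by (simp add: field_simps power2_eq_square)
    ultimately show ?thesis by simp
  qed
  have h1': "(eann_C b has_integral (s + a / 2)) {s..s + a}"
  proof (rule has_integral_spike_finite[OF _ _ h1, of "{s}"])
    fix x assume x: "x \<in> {s..s + a} - {s}"
    then have "s < x" "x \<le> s + a" by auto
    moreover have "x \<le> s + b ^ n" using calculation(2) aba bn by linarith
    ultimately show "eann_C b x = x / a" using x C_seg[OF b n, of x] by (simp add: s_def a_def)
  qed simp
  have h2: "((\<lambda>B. B / (B - s)) has_integral ((b - 1) * a + s * ln b)) {s + a..s + b * a}"
  proof -
    define F where "F = (\<lambda>B. B + s * ln (B - s))"
    have "((\<lambda>B. B / (B - s)) has_integral (F (s + b * a) - F (s + a))) {s + a..s + b * a}"
    proof (rule fundamental_theorem_of_calculus)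
      show "s + a \<le> s + b * a" using aba by simp
      fix x assume x: "x \<in> {s + a..s + b * a}"
      then have xs: "x - s > 0" using a0 by auto
      have "(F has_real_derivative (1 + s * (1 / (x - s)))) (at x within {s + a..s + b * a})"
        unfolding F_def using xs by (auto intro!: derivative_eq_intros)
      moreover have "1 + s * (1 / (x - s)) = x / (x - s)" using xs by (simp add: field_simps)
      ultimately show "(F has_vector_derivative x / (x - s)) (at x within {s + a..s + b * a})"
        by (simp add: has_real_derivative_iff_has_vector_derivative[symmetric])
    qed
    moreover have "F (s + b * a) - F (s + a) = (b - 1) * a + s * ln b"
      unfolding F_def using a0 b by (simp add: ln_mult algebra_simps)
    ultimately show ?thesis by simp
  qed
  have h2': "(eann_C b has_integral ((b - 1) * a + s * ln b)) {s + a..s + b * a}"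
  proof (rule has_integral_spike_finite[OF _ _ h2, of "{}"])
    fix x assume x: "x \<in> {s + a..s + b * a} - {}"
    then have "s < x" "x \<le> s + b ^ n" using a0 bn by auto
    then show "eann_C b x = x / (x - s)" using x C_seg[OF b n, of x] by (auto simp: s_def a_def)
  qed simp
  have "(eann_C b has_integral ((s + a / 2) + ((b - 1) * a + s * ln b))) {s..s + b * a}"
    by (rule has_integral_combine[OF _ _ h1' h2']) (use a0 aba in auto)
  moreover have "(s + a / 2) + ((b - 1) * a + s * ln b) = s * (1 + ln b) + a * (b - 1/2)"
    by (simp add: algebra_simps)
  ultimately show ?thesis by (simp add: s_def a_def bn)
qed


lemma S_nonneg: assumes "b > 1" shows "eann_S b n \<ge> 0"
  unfolding eann_S_def using assms by (intro sum_nonneg) simp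

lemma key_id_aux:
  fixes s a b :: real
  assumes "b > 1" "a > 0" "s * (b - 1) = b * a - 1"
  shows "s / a + 1 / ((b - 1) * a) = b / (b - 1)"
proof -
  have "s / a + 1 / ((b - 1) * a) = (s * (b - 1) + 1) / ((b - 1) * a)"
    using assms(1,2) by (simp add: field_simps)
  also have "\<dots> = (b * a) / ((b - 1) * a)" using assms(3) by simp
  also have "\<dots> = b / (b - 1)" using assms by simp
  finally show ?thesis .
qed

lemma key_id: assumes "b > 1" "n \<ge> 1"
  shows "eann_S b n / b ^ (n - 1) + 1 / ((b - 1) * b ^ (n - 1)) = b / (b - 1)"
proof -
  have c: "eann_S b n * (b - 1) = b * b ^ (n - 1) - 1"
    using S_closed[of b n] bn_eq[OF assms(2), of b] by simp
  have "b ^ (n - 1) > 0" using assms by auto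
  then show ?thesis using key_id_aux[OF assms(1) _ c] by blast
qed

lemma total_int:
  assumes b: "b > 1"
  shows "\<exists>I. (eann_C b has_integral I) {1..eann_S b (Suc m)}
           \<and> I \<le> (1 - 1 / (2 * b) + (1 + ln b) / (b - 1)) * (eann_S b (Suc m) - 1)"
proof (induction m)
  case 0
  have "eann_S b (Suc 0) = 1" by (simp add: eann_S_def)
  moreover have "(eann_C b has_integral 0) {1..1::real}"
    using has_integral_refl(2)[of "eann_C b" "1::real"] by simp
  ultimately show ?case by (intro exI[of _ 0]) simp
next
  case (Suc m)
  define K where "K = 1 - 1 / (2 * b) + (1 + ln b) / (b - 1)"
  define n where "n = Suc m"
  obtain I where I: "(eann_C b has_integral I) {1..eann_S b n}" "I \<le> K * (eann_S b n - 1)"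
    using Suc unfolding K_def n_def by blast
  have n1: "n \<ge> 1" by (simp add: n_def)
  define s where "s = eann_S b n"
  define a where "a = b ^ (n - 1)"
  have a0: "a > 0" using b by (simp add: a_def)
  have bn: "b ^ n = b * a" using bn_eq[OF n1] by (simp add: a_def)
  have J: "(eann_C b has_integral (s * (1 + ln b) + a * (b - 1/2))) {s .. s + b ^ n}"
    using seg_integral[OF b n1] by (simp add: s_def a_def)
  have s1: "1 \<le> s" using S_ge_n[OF b, of n] n1 unfolding s_def by linarith
  have comb: "(eann_C b has_integral (I + (s * (1 + ln b) + a * (b - 1/2)))) {1 .. s + b ^ n}"
    by (rule has_integral_combine[OF _ _ I(1)[folded s_def] J]) (use s1 a0 bn b in auto)
  have sc: "s * (b - 1) = b ^ n - 1" using S_closed[of b n] by (simp add: s_def)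
  have sle: "s \<le> b ^ n / (b - 1)" using sc b by (simp add: field_simps)
  have lnb: "1 + ln b \<ge> 0" using b by (simp add: ln_gt_zero less_imp_le add_nonneg_nonneg)
  have "s * (1 + ln b) \<le> b ^ n / (b - 1) * (1 + ln b)"
    using mult_right_mono[OF sle lnb] .
  moreover have "K * b ^ n = b ^ n / (b - 1) * (1 + ln b) + a * (b - 1/2)"
    unfolding K_def bn using b by (simp add: field_simps)
  ultimately have Jle: "s * (1 + ln b) + a * (b - 1/2) \<le> K * b ^ n" by linarith
  have "eann_S b (Suc n) = s + b ^ n" by (simp add: S_Suc s_def)
  moreover have "I + (s * (1 + ln b) + a * (b - 1/2)) \<le> K * (s + b ^ n - 1)"
    using I(2) Jle unfolding s_def by (simp add: algebra_simps)
  ultimately show ?case using comb unfolding K_def n_def by (intro exI[of _ "I + (s * (1 + ln b) + a * (b - 1/2))"]) simp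
qed

lemma C_bounds:
  assumes b: "b > 1" and B: "B > 1"
  shows "1 < eann_C b B \<and> eann_C b B \<le> 2 + 1 / (b - 1)"
proof -
  obtain n where n: "n \<ge> 1" "eann_S b n < B" "B \<le> eann_S b n + b ^ n"
    using exists_seg[OF b B] by blast
  define s where "s = eann_S b n"
  define a where "a = b ^ (n - 1)"
  have a0: "a > 0" using b by (simp add: a_def)
  have bn: "b ^ n = b * a" using bn_eq[OF n(1)] by (simp add: a_def)
  have sa: "s \<ge> a"
  proof -
    have "eann_S b n = eann_S b (n - 1) + a"
      using S_Suc[of b "n - 1"] n(1) by (simp add: a_def)
    then show ?thesis using S_nonneg[OF b, of "n - 1"] by (simp add: s_def)
  qed
  have kid: "s / a + 1 / ((b - 1) * a) = b / (b - 1)"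
    using key_id[OF b n(1)] by (simp add: s_def a_def)
  have "1 / ((b - 1) * a) > 0" using a0 b by simp
  then have "s / a \<le> b / (b - 1)" using kid by linarith
  moreover have "b / (b - 1) = 1 + 1 / (b - 1)" using b by (simp add: field_simps)
  ultimately have sab: "s / a \<le> 1 + 1 / (b - 1)" by simp
  have C: "eann_C b B = (if B - s > a then B / (B - s) else B / a)"
    using C_seg[OF b n] by (simp add: s_def a_def)
  show ?thesis
  proof (cases "B - s > a")
    case True
    then have pos: "B - s > 0" using a0 by linarith
    have "s * a \<le> s * (B - s)" using True sa a0 by (intro mult_left_mono) auto
    then have "B / (B - s) \<le> 1 + s / a" using pos a0 by (simp add: field_simps)
    moreover have "B / (B - s) > 1" using pos sa a0 by (simp add: field_simps)
    ultimately show ?thesis using C True sab by simp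
  next
    case False
    then have "B / a \<le> 1 + s / a" using a0 by (simp add: field_simps)
    moreover have "B / a > 1" using a0 sa n(2) by (simp add: field_simps s_def)
    ultimately show ?thesis using C False sab by simp
  qed
qed

lemma C_one: assumes b: "b > 1" shows "eann_C b 1 = 1"
proof -
  have i: "eann_idx b 1 = 0" using idx_eq[OF b, of 0 1] by (simp add: eann_S_def)
  have e: "b powr (0 - 1) = 1 / b" using b by (simp add: powr_minus divide_inverse)
  have "1 / b < 1" using b by simp
  then have "b powr (0 - 1) < 1" using e by simp
  then show ?thesis unfolding eann_C_def eann_depth_def eann_z_def Let_def i
    by (simp add: eann_S_def)
qed

theorem proposition1:
  fixes b :: real
  assumes "b > 1"
  shows "(\<forall>B>1. eann_C b B > 1)
    \<and> (SUP B\<in>{1..}. eann_C b B) = 2 + 1 / (b - 1)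
    \<and> (\<forall>N\<ge>2. eann_C b integrable_on {1..eann_S b N}
           \<and> integral {1..eann_S b N} (eann_C b) / (eann_S b N - 1)
               \<le> 1 - 1 / (2 * b) + (1 + ln b) / (b - 1))"
proof (intro conjI allI impI)
  have b: "b > 1" by fact
  define M where "M = 2 + 1 / (b - 1)"
  show "\<And>B. B > 1 \<Longrightarrow> eann_C b B > 1" using C_bounds[OF b] by blast
  have ub: "\<And>B. B \<in> {1..} \<Longrightarrow> eann_C b B \<le> M"
  proof -
    fix B :: real assume "B \<in> {1..}"
    then have "B = 1 \<or> B > 1" by auto
    moreover have "1 \<le> M" using b by (simp add: M_def)
    ultimately show "eann_C b B \<le> M" using C_bounds[OF b, of B] C_one[OF b] unfolding M_def by auto
  qed
  have bdd: "bdd_above (eann_C b ` {1..})" using ub by (intro bdd_aboveI2) 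
  have le: "(SUP B\<in>{1..}. eann_C b B) \<le> M"
    by (rule cSUP_least) (use ub in auto)
  have ge: "M \<le> (SUP B\<in>{1..}. eann_C b B)"
  proof (rule ccontr)
    define Sp where "Sp = (SUP B\<in>{1..}. eann_C b B)"
    assume "\<not> M \<le> (SUP B\<in>{1..}. eann_C b B)"
    then have lt: "Sp < M" by (simp add: Sp_def)
    obtain m where m: "1 / ((b - 1) * (M - Sp)) < b ^ m" using real_arch_pow[OF b] by blast
    define n where "n = Suc m"
    have n1: "n \<ge> 1" by (simp add: n_def)
    define s where "s = eann_S b n"
    define a where "a = b ^ (n - 1)"
    have am: "a = b ^ m" by (simp add: a_def n_def)
    have a0: "a > 0" using b by (simp add: a_def)
    have bn: "b ^ n = b * a" using bn_eq[OF n1] by (simp add: a_def)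
    have sa: "s \<ge> 0" using S_nonneg[OF b] by (simp add: s_def)
    have kid: "s / a + 1 / ((b - 1) * a) = b / (b - 1)"
      using key_id[OF b n1] by (simp add: s_def a_def)
    have C: "eann_C b (s + a) = (s + a) / a"
    proof -
      have "s < s + a" "s + a \<le> s + b ^ n" using a0 bn b by auto
      then show ?thesis using C_seg[OF b n1, of "s + a"] by (simp add: s_def a_def)
    qed
    have e1: "(s + a) / a = 1 + s / a" using a0 by (simp add: field_simps)
    have e2: "b / (b - 1) = 1 + 1 / (b - 1)" using b by (simp add: field_simps)
    have CM: "eann_C b (s + a) = M - 1 / ((b - 1) * a)"
      using C kid e1 e2 unfolding M_def by linarith
    have "1 / ((b - 1) * a) < M - Sp"
    proof -
      have p: "(b - 1) * (M - Sp) > 0" using b lt by simp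
      have "1 < b ^ m * ((b - 1) * (M - Sp))" using m p by (simp add: field_simps)
      then show ?thesis using a0 b am by (simp add: field_simps)
    qed
    then have "eann_C b (s + a) > Sp" using CM by linarith
    moreover have "s + a \<in> {1..}"
      using S_ge_n[OF b, of n] n1 a0 unfolding s_def by auto
    ultimately show False using cSUP_upper[OF _ bdd, of "s + a"] unfolding Sp_def by auto
  qed
  show "(SUP B\<in>{1..}. eann_C b B) = 2 + 1 / (b - 1)" using le ge unfolding M_def by linarith
  fix N :: nat assume N: "N \<ge> 2"
  then obtain m where Nm: "N = Suc m" by (cases N) auto
  obtain I where I: "(eann_C b has_integral I) {1..eann_S b N}"
    "I \<le> (1 - 1 / (2 * b) + (1 + ln b) / (b - 1)) * (eann_S b N - 1)"
    using total_int[OF b, of m] Nm by blast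
  show "eann_C b integrable_on {1..eann_S b N}" using I(1) by blast
  have pos: "eann_S b N - 1 > 0" using S_ge_n[OF b, of N] N by linarith
  have "integral {1..eann_S b N} (eann_C b) = I" using I(1) by (rule integral_unique)
  then show "integral {1..eann_S b N} (eann_C b) / (eann_S b N - 1)
               \<le> 1 - 1 / (2 * b) + (1 + ln b) / (b - 1)"
    using I(2) pos by (simp add: divide_le_eq)
qed

end
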